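(* $\mathfrak{L}(\mathbb{Z}^2) \subsetneq \mathfrak{L}(\mathbf{H})$.
   Context: For a group $G$ with identity $e$, a $G$-automaton is a tuple $(Q,\Sigma,G,\delta,q_0,Q_a)$ where $Q$ is a finite set of states, $\Sigma$ a finite input alphabet, $q_0\in Q$ the initial state, $Q_a\subseteq Q$ the accepting states, and $\delta$ assigns to each $(q,\sigma)\in Q\times(\Sigma\cup\{\varepsilon\})$ a finite set of pairs $(q',m)\in Q\times G$. The register holds an element of $G$, initially $e$; using a transition $(q',m)\in\delta(q,\sigma)$ the automaton reads $\sigma$ (or nothing), moves to $q'$ and replaces the register content $x$ by $xm$. A word is accepted if some computation reads it entirely and ends in an accepting state with register equal to $e$. $\mathfrak{L}(G)$ is the class of languages recognized by $G$-automata. $\mathbb{Z}^2$ is the free Abelian group of rank 2. $\mathbf{H}$ is the discrete Heisenberg group $\langle a,b\mid ab=bac,\ ac=ca,\ bc=cb\rangle$ with $c=a^{-1}b^{-1}ab$, equivalently the group of $3\times3$ upper unitriangular integer matrices. *)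

theory Defs
  imports "HOL-Algebra.Elementary_Groups"
begin

text \<open>States and input letters are taken from nat (any finite
  sets of states / letters can be renamed into nat).  The transition function
  delta : Q x (Sigma + {eps}) -> finite subsets of Q x G is given as a finite
  relation: (q, Some s, q', m) means (q', m) in delta(q, s), and
  (q, None, q', m) means (q', m) in delta(q, eps).\<close>

record 'g gaut =
  states :: "nat set"
  alph   :: "nat set"
  init   :: nat
  accs   :: "nat set"
  trans  :: "(nat \<times> nat option \<times> nat \<times> 'g) set"

definition wf_gaut :: "('g, 'm) monoid_scheme \<Rightarrow> 'g gaut \<Rightarrow> bool" where
  "wf_gaut G A \<longleftrightarrow> finite (states A) \<and> finite (alph A) \<and> init A \<in> states A \<and>
     accs A \<subseteq> states A \<and> finite (trans A) \<and>
     trans A \<subseteq> states A \<times> (insert None (Some ` alph A)) \<times> states A \<times> carrier G"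

inductive reach :: "('g, 'm) monoid_scheme \<Rightarrow> 'g gaut \<Rightarrow> nat \<Rightarrow> nat list \<Rightarrow> 'g \<Rightarrow> bool"
  for G A where
  start: "reach G A (init A) [] \<one>\<^bsub>G\<^esub>"
| eps:  "reach G A q w x \<Longrightarrow> (q, None, q', m) \<in> trans A \<Longrightarrow> reach G A q' w (x \<otimes>\<^bsub>G\<^esub> m)"
| read: "reach G A q w x \<Longrightarrow> (q, Some s, q', m) \<in> trans A \<Longrightarrow> reach G A q' (w @ [s]) (x \<otimes>\<^bsub>G\<^esub> m)"

definition gaut_lang :: "('g, 'm) monoid_scheme \<Rightarrow> 'g gaut \<Rightarrow> nat list set" where
  "gaut_lang G A = {w. \<exists>q \<in> accs A. reach G A q w \<one>\<^bsub>G\<^esub>}"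

definition LClass :: "('g, 'm) monoid_scheme \<Rightarrow> nat list set set" where
  "LClass G = {gaut_lang G A | A. wf_gaut G A}"

definition Z2 :: "(int \<times> int) monoid" where
  "Z2 = integer_group \<times>\<times> integer_group"

text \<open>Discrete Heisenberg group: upper unitriangular integer matrices
  [[1,a,c],[0,1,b],[0,0,1]] encoded as (a,b,c); matrix multiplication gives
  (a,b,c)(a',b',c') = (a+a', b+b', c+c'+a*b').\<close>
definition Heis :: "(int \<times> int \<times> int) monoid" where
  "Heis = \<lparr>carrier = UNIV,
           monoid.mult = (\<lambda>(a, b, c) (a', b', c'). (a + a', b + b', c + c' + a * b')),
           one = (0, 0, 0)\<rparr>"

end

theory Submission
  imports Defs "HOL-Library.Multiset" "HOL-Library.Ramsey"
begin


definition src :: "nat \<times> nat option \<times> nat \<times> 'g \<Rightarrow> nat" where "src t = fst t"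
definition lbl :: "nat \<times> nat option \<times> nat \<times> 'g \<Rightarrow> nat option" where "lbl t = fst (snd t)"
definition tgt :: "nat \<times> nat option \<times> nat \<times> 'g \<Rightarrow> nat" where "tgt t = fst (snd (snd t))"
definition mv :: "nat \<times> nat option \<times> nat \<times> 'g \<Rightarrow> 'g" where "mv t = snd (snd (snd t))"

fun walk :: "(nat \<times> nat option \<times> nat \<times> 'g) set \<Rightarrow> nat \<Rightarrow> (nat \<times> nat option \<times> nat \<times> 'g) list \<Rightarrow> nat \<Rightarrow> bool" where
  "walk T q [] q' = (q = q')"
| "walk T q (t # ts) q' = (t \<in> T \<and> src t = q \<and> walk T (tgt t) ts q')"

definition lblw :: "nat \<times> nat option \<times> nat \<times> 'g \<Rightarrow> nat list" where
  "lblw t = (case lbl t of None \<Rightarrow> [] | Some s \<Rightarrow> [s])"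

definition word :: "(nat \<times> nat option \<times> nat \<times> 'g) list \<Rightarrow> nat list" where
  "word ts = concat (map lblw ts)"

lemma walk_append: "walk T q (xs @ ys) q' \<longleftrightarrow> (\<exists>r. walk T q xs r \<and> walk T r ys q')"
  by (induction xs arbitrary: q) auto

lemma walk_snoc: "walk T q (xs @ [t]) q' \<longleftrightarrow> walk T q xs (src t) \<and> t \<in> T \<and> tgt t = q'"
  by (auto simp: walk_append)

lemma walk_set: "walk T q ts q' \<Longrightarrow> set ts \<subseteq> T"
  by (induction ts arbitrary: q) auto

lemma walk_split_at_tgt:
  "walk T q ts q' \<Longrightarrow> p \<in> set (map tgt ts) \<Longrightarrow>
     \<exists>a b. ts = a @ b \<and> a \<noteq> [] \<and> walk T q a p \<and> walk T p b q'"
proof (induction ts arbitrary: q)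
  case Nil then show ?case by simp
next
  case (Cons t ts)
  show ?case
  proof (cases "tgt t = p")
    case True
    then show ?thesis using Cons.prems by (intro exI[of _ "[t]"] exI[of _ ts]) auto
  next
    case False
    then have "p \<in> set (map tgt ts)" using Cons.prems(2) by simp
    moreover have "walk T (tgt t) ts q'" using Cons.prems(1) by simp
    ultimately obtain a b where "ts = a @ b" "a \<noteq> []" "walk T (tgt t) a p" "walk T p b q'"
      using Cons.IH by blast
    then show ?thesis using Cons.prems by (intro exI[of _ "t # a"] exI[of _ b]) auto
  qed
qed

lemma walk_cycle:
  assumes "walk T q ts q'" "finite S" "q \<in> S" "tgt ` set ts \<subseteq> S" "card S \<le> length ts"
  shows "\<exists>a c b p. ts = a @ c @ b \<and> c \<noteq> [] \<and> walk T q a p \<and> walk T p c p \<and> walk T p b q'"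
  using assms
proof (induction ts arbitrary: q S)
  case Nil
  then have "S = {}" by simp
  then show ?case using Nil by simp
next
  case (Cons t ts)
  show ?case
  proof (cases "q \<in> set (map tgt (t # ts))")
    case True
    then obtain a b where "t # ts = a @ b" "a \<noteq> []" "walk T q a q" "walk T q b q'"
      using walk_split_at_tgt[OF Cons.prems(1)] by blast
    then show ?thesis by (intro exI[of _ "[]"] exI[of _ a] exI[of _ b] exI[of _ q]) auto
  next
    case False
    have w: "walk T (tgt t) ts q'" and tT: "t \<in> T" "src t = q" using Cons.prems by auto
    have nq: "q \<notin> tgt ` set ts" "tgt t \<noteq> q" using False by (simp_all only: list.map set_map list.set insert_iff) blast+
    have "tgt ` set ts \<subseteq> S - {q}" using nq Cons.prems(4) by (simp only: list.set image_insert) blast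
    moreover have "tgt t \<in> S - {q}" using nq Cons.prems(4) by (simp only: list.set image_insert) blast
    moreover have "card (S - {q}) \<le> length ts" using Cons.prems by auto
    ultimately obtain a c b p where "ts = a @ c @ b" "c \<noteq> []" "walk T (tgt t) a p" "walk T p c p" "walk T p b q'"
      using Cons.IH[OF w, of "S - {q}"] Cons.prems(2) by blast
    then show ?thesis using tT by (intro exI[of _ "t # a"] exI[of _ c] exI[of _ b] exI[of _ p]) auto
  qed
qed

lemma walk_states:
  assumes "walk T q ts q'" "\<forall>t\<in>T. tgt t \<in> S"
  shows "tgt ` set ts \<subseteq> S"
  using walk_set[OF assms(1)] assms(2) by auto

lemma walk_short_cycle:
  assumes "walk T q ts q'" "finite S" "q \<in> S" "\<forall>t\<in>T. tgt t \<in> S" "card S < length ts"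
  shows "\<exists>a c b p. ts = a @ c @ b \<and> c \<noteq> [] \<and> length c \<le> card S \<and> walk T q a p \<and> walk T p c p \<and> walk T p b q'"
proof -
  let ?s = "card S"
  have "ts = take ?s ts @ drop ?s ts" by simp
  then obtain r where w1: "walk T q (take ?s ts) r" and w2: "walk T r (drop ?s ts) q'"
    using assms(1) walk_append by metis
  have "tgt ` set (take ?s ts) \<subseteq> S" using walk_states[OF w1 assms(4)] .
  moreover have "card S \<le> length (take ?s ts)" using assms(5) by simp
  ultimately obtain a c b p where d: "take ?s ts = a @ c @ b" "c \<noteq> []" "walk T q a p" "walk T p c p" "walk T p b r"
    using walk_cycle[OF w1 assms(2,3)] by blast
  have "length (take ?s ts) \<le> ?s" by simp
  then have "length c \<le> ?s" unfolding d(1) by simp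
  moreover have "ts = a @ c @ (b @ drop ?s ts)" using d(1) by (metis append_assoc append_take_drop_id)
  moreover have "walk T p (b @ drop ?s ts) q'" using d(5) w2 walk_append by metis
  ultimately show ?thesis using d by blast
qed

lemma decomp:
  assumes "walk T q ts q'" "finite S" "q \<in> S" "\<forall>t\<in>T. tgt t \<in> S"
  shows "\<exists>\<sigma> Cs. walk T q \<sigma> q' \<and> length \<sigma> \<le> card S \<and>
     (\<forall>c\<in>#Cs. c \<noteq> [] \<and> length c \<le> card S \<and> (\<exists>p. walk T p c p)) \<and>
     mset ts = mset \<sigma> + sum_mset (image_mset mset Cs)"
  using assms(1)
proof (induction "length ts" arbitrary: ts rule: less_induct)
  case less
  show ?case
  proof (cases "length ts \<le> card S")
    case True
    then show ?thesis using less.prems by (intro exI[of _ ts] exI[of _ "{#}"]) auto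
  next
    case False
    then obtain a c b p where d: "ts = a @ c @ b" "c \<noteq> []" "length c \<le> card S" "walk T q a p" "walk T p c p" "walk T p b q'"
      using walk_short_cycle[OF less.prems assms(2,3,4)] by auto
    have w: "walk T q (a @ b) q'" using d walk_append by metis
    have "length (a @ b) < length ts" using d by simp
    then obtain \<sigma> Cs where IH: "walk T q \<sigma> q'" "length \<sigma> \<le> card S"
      "\<forall>c\<in>#Cs. c \<noteq> [] \<and> length c \<le> card S \<and> (\<exists>p. walk T p c p)"
      "mset (a @ b) = mset \<sigma> + sum_mset (image_mset mset Cs)"
      using less.hyps w by blast
    show ?thesis
      apply (intro exI[of _ \<sigma>] exI[of _ "add_mset c Cs"])
      using IH d by auto
  qed
qed

lemma insert_cycle:
  assumes "walk T q ts q'" "walk T p c p" "c \<noteq> []" "set c \<subseteq> set ts"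
  shows "\<exists>ts'. walk T q ts' q' \<and> mset ts' = mset ts + mset c \<and> set ts' = set ts"
proof -
  obtain t0 c' where c: "c = t0 # c'" using assms(3) by (cases c) auto
  have p: "src t0 = p" using assms(2) c by simp
  have "t0 \<in> set ts" using assms(4) c by auto
  then obtain a b where ab: "ts = a @ t0 # b" by (meson split_list)
  then obtain r where "walk T q a r" "walk T r (t0 # b) q'" using assms(1) walk_append by metis
  then have r: "r = p" and wa: "walk T q a p" using p by auto
  have "walk T p (t0 # b) q'" using \<open>walk T r (t0 # b) q'\<close> r by simp
  then have "walk T q (a @ c @ t0 # b) q'" using wa assms(2) walk_append by metis
  then show ?thesis
    apply (intro exI[of _ "a @ c @ t0 # b"])
    using ab assms(4) by auto
qed

lemma insert_cycles:
  assumes "walk T q ts q'" "\<forall>c\<in>#Cs. c \<noteq> [] \<and> (\<exists>p. walk T p c p) \<and> set c \<subseteq> set ts"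
  shows "\<exists>ts'. walk T q ts' q' \<and> mset ts' = mset ts + sum_mset (image_mset mset Cs) \<and> set ts' = set ts"
  using assms(2)
proof (induction Cs)
  case empty
  then show ?case using assms(1) by auto
next
  case (add c Cs)
  then obtain ts' where ts': "walk T q ts' q'" "mset ts' = mset ts + sum_mset (image_mset mset Cs)" "set ts' = set ts"
    by auto
  obtain p where "walk T p c p" "c \<noteq> []" "set c \<subseteq> set ts" using add.prems by auto
  then obtain ts'' where "walk T q ts'' q'" "mset ts'' = mset ts' + mset c" "set ts'' = set ts'"
    using insert_cycle[OF ts'(1)] ts'(3) by metis
  then show ?case using ts' by (intro exI[of _ ts'']) (auto simp: add_ac)
qed

lemma insert_cycles_rep:
  assumes "walk T q ts q'" "\<forall>c\<in>#Cs. c \<noteq> [] \<and> (\<exists>p. walk T p c p) \<and> set c \<subseteq> set ts"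
  shows "\<exists>ts'. walk T q ts' q' \<and> mset ts' = mset ts + repeat_mset k (sum_mset (image_mset mset Cs)) \<and> set ts' = set ts"
proof (induction k)
  case 0
  then show ?case using assms(1) by auto
next
  case (Suc k)
  then obtain ts' where ts': "walk T q ts' q'" "mset ts' = mset ts + repeat_mset k (sum_mset (image_mset mset Cs))" "set ts' = set ts"
    by auto
  then obtain ts'' where "walk T q ts'' q'" "mset ts'' = mset ts' + sum_mset (image_mset mset Cs)" "set ts'' = set ts'"
    using insert_cycles[OF ts'(1)] assms(2) by metis
  then show ?case using ts' by (intro exI[of _ ts'']) (auto simp: add_ac)
qed



lemma mono_subseq:
  fixes h :: "nat \<Rightarrow> nat"
  assumes "infinite S"
  shows "\<exists>Y\<subseteq>S. infinite Y \<and> (\<forall>i\<in>Y. \<forall>j\<in>Y. i < j \<longrightarrow> h i \<le> h j)"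
proof -
  define f where "f X = (if h (Min X) \<le> h (Max X) then 0 else (1::nat))" for X :: "nat set"
  have "\<forall>x\<in>S. \<forall>y\<in>S. x \<noteq> y \<longrightarrow> f {x, y} < 2" unfolding f_def by simp
  then have "\<exists>Y t. Y \<subseteq> S \<and> infinite Y \<and> t < 2 \<and> (\<forall>x\<in>Y. \<forall>y\<in>Y. x\<noteq>y \<longrightarrow> f {x, y} = t)"
    by (rule Ramsey2[OF assms])
  then obtain Y t where Y0: "Y \<subseteq> S \<and> infinite Y \<and> t < 2 \<and> (\<forall>x\<in>Y. \<forall>y\<in>Y. x\<noteq>y \<longrightarrow> f {x, y} = t)"
    by (elim exE)
  have Y: "Y \<subseteq> S" "infinite Y" "t < 2" "\<forall>x\<in>Y. \<forall>y\<in>Y. x\<noteq>y \<longrightarrow> f {x, y} = t"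
    using Y0 by blast+
  show ?thesis
  proof (cases "t = 0")
    case True
    have "h i \<le> h j" if "i \<in> Y" "j \<in> Y" "i < j" for i j
    proof -
      have "f {i, j} = 0" using Y(4) that True by auto
      moreover have "Min {i, j} = i" "Max {i, j} = j" using that by auto
      ultimately show ?thesis unfolding f_def by (auto split: if_splits)
    qed
    then have "\<forall>i\<in>Y. \<forall>j\<in>Y. i < j \<longrightarrow> h i \<le> h j" by blast
    then show ?thesis using Y(1,2) by blast
  next
    case False
    then have t1: "t = 1" using Y(3) by simp
    have lt: "h j < h i" if "i \<in> Y" "j \<in> Y" "i < j" for i j
    proof -
      have "f {i, j} = 1" using Y(4) that t1 by auto
      moreover have "Min {i, j} = i" "Max {i, j} = j" using that by auto
      ultimately show ?thesis unfolding f_def by (auto split: if_splits)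
    qed
    obtain y0 where "y0 \<in> Y" using Y(2) by (metis finite.emptyI ex_in_conv)
    then obtain y1 where y1: "y1 \<in> Y" "\<forall>y. y \<in> Y \<longrightarrow> h y1 \<le> h y"
      using ex_has_least_nat[of "\<lambda>y. y \<in> Y" y0 h] by blast
    obtain y2 where y2: "y2 \<in> Y" "y2 > y1" using Y(2) by (meson infinite_nat_iff_unbounded)
    have "h y2 < h y1" using lt[OF y1(1) y2] .
    moreover have "h y1 \<le> h y2" using y1(2) y2(1) by blast
    ultimately show ?thesis by simp
  qed
qed

lemma dickson_fin:
  fixes f :: "nat \<Rightarrow> 'c \<Rightarrow> nat"
  assumes "finite C" "infinite S"
  shows "\<exists>Y\<subseteq>S. infinite Y \<and> (\<forall>i\<in>Y. \<forall>j\<in>Y. i < j \<longrightarrow> (\<forall>c\<in>C. f i c \<le> f j c))"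
  using assms(1)
proof (induction C rule: finite_induct)
  case empty
  show ?case using assms(2) by (intro exI[of _ S]) simp
next
  case (insert x C)
  from insert.IH obtain Y where Y: "Y \<subseteq> S" "infinite Y" "\<forall>i\<in>Y. \<forall>j\<in>Y. i < j \<longrightarrow> (\<forall>c\<in>C. f i c \<le> f j c)" by blast
  obtain Y' where Y': "Y' \<subseteq> Y" "infinite Y'" "\<forall>i\<in>Y'. \<forall>j\<in>Y'. i < j \<longrightarrow> f i x \<le> f j x"
    using mono_subseq[OF Y(2), of "\<lambda>i. f i x"] by blast
  have "\<forall>i\<in>Y'. \<forall>j\<in>Y'. i < j \<longrightarrow> (\<forall>c\<in>insert x C. f i c \<le> f j c)"
  proof (intro ballI impI)
    fix i j c assume "i \<in> Y'" "j \<in> Y'" "i < j" "c \<in> insert x C"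
    moreover have "i \<in> Y" "j \<in> Y" using Y'(1) \<open>i \<in> Y'\<close> \<open>j \<in> Y'\<close> by auto
    ultimately show "f i c \<le> f j c" using Y(3) Y'(3) by (cases "c = x") (simp, metis insertE)
  qed
  moreover have "Y' \<subseteq> S" using Y'(1) Y(1) by (rule order_trans)
  ultimately show ?case using Y'(2) by (intro exI[of _ Y'] conjI)
qed

lemma dickson_col:
  fixes f :: "nat \<Rightarrow> 'c \<Rightarrow> nat" and g :: "nat \<Rightarrow> 'b"
  assumes "finite C" "finite (range g)"
  shows "\<exists>i j. i < j \<and> g i = g j \<and> (\<forall>c\<in>C. f i c \<le> f j c)"
proof -
  obtain a0 where a0: "infinite {a \<in> (UNIV::nat set). g a = g a0}"
    using pigeonhole_infinite[of "UNIV::nat set" g] assms(2) by auto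
  obtain Y where Y: "Y \<subseteq> {a \<in> (UNIV::nat set). g a = g a0}" "infinite Y" "\<forall>i\<in>Y. \<forall>j\<in>Y. i < j \<longrightarrow> (\<forall>c\<in>C. f i c \<le> f j c)"
    using dickson_fin[OF assms(1) a0, of f] by blast
  obtain i where i: "i \<in> Y" using Y(2) by (metis finite.emptyI ex_in_conv)
  obtain j where j: "j \<in> Y" "j > i" using Y(2) by (meson infinite_nat_iff_unbounded)
  have "g i = g a0" "g j = g a0" using i j Y(1) by blast+
  then have "g i = g j" by simp
  moreover have "\<forall>c\<in>C. f i c \<le> f j c" using Y(3) i j by blast
  ultimately show ?thesis using j(2) by blast
qed



definition vs1 :: "(nat \<times> nat option \<times> nat \<times> (int \<times> int)) multiset \<Rightarrow> int" where
  "vs1 M = sum_mset (image_mset (\<lambda>t. fst (mv t)) M)"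
definition vs2 :: "(nat \<times> nat option \<times> nat \<times> (int \<times> int)) multiset \<Rightarrow> int" where
  "vs2 M = sum_mset (image_mset (\<lambda>t. snd (mv t)) M)"
definition nl :: "(nat \<times> nat option \<times> nat \<times> 'g) multiset \<Rightarrow> nat" where
  "nl M = size (filter_mset (\<lambda>t. lbl t \<noteq> None) M)"

lemma vs1_add[simp]: "vs1 (M + N) = vs1 M + vs1 N" by (simp add: vs1_def)
lemma vs2_add[simp]: "vs2 (M + N) = vs2 M + vs2 N" by (simp add: vs2_def)
lemma nl_add[simp]: "nl (M + N) = nl M + nl N" by (simp add: nl_def)
lemma vs_empty[simp]: "vs1 {#} = 0" "vs2 {#} = 0" "nl {#} = 0" by (simp_all add: vs1_def vs2_def nl_def)
lemma vs1_rep[simp]: "vs1 (repeat_mset k M) = int k * vs1 M"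
  by (induction k) (auto simp: algebra_simps)
lemma vs2_rep[simp]: "vs2 (repeat_mset k M) = int k * vs2 M"
  by (induction k) (auto simp: algebra_simps)
lemma nl_rep[simp]: "nl (repeat_mset k M) = k * nl M"
  by (induction k) auto
lemma vs1_add_mset[simp]: "vs1 (add_mset t M) = fst (mv t) + vs1 M" by (simp add: vs1_def)
lemma vs2_add_mset[simp]: "vs2 (add_mset t M) = snd (mv t) + vs2 M" by (simp add: vs2_def)

lemma Z2_simps: "carrier Z2 = UNIV" "\<one>\<^bsub>Z2\<^esub> = (0, 0)" "x \<otimes>\<^bsub>Z2\<^esub> y = (fst x + fst y, snd x + snd y)"
  by (auto simp: Z2_def DirProd_def integer_group_def split: prod.splits)

lemma word_snoc[simp]: "word (ts @ [t]) = word ts @ lblw t" by (simp add: word_def)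
lemma word_Nil[simp]: "word [] = []" by (simp add: word_def)
lemma word_Cons[simp]: "word (t # ts) = lblw t @ word ts" by (simp add: word_def)

lemma reach_walk_Z2:
  "reach Z2 A q w x \<Longrightarrow> \<exists>ts. walk (trans A) (init A) ts q \<and> word ts = w \<and> x = (vs1 (mset ts), vs2 (mset ts))"
proof (induction rule: reach.induct)
  case start
  then show ?case by (intro exI[of _ "[]"]) (simp add: Z2_simps)
next
  case (eps q w x q' m)
  then obtain ts where ts: "walk (trans A) (init A) ts q" "word ts = w" "x = (vs1 (mset ts), vs2 (mset ts))" by blast
  let ?t = "(q, None, q', m)"
  have "walk (trans A) (init A) (ts @ [?t]) q'" using ts eps.hyps(2) by (simp add: walk_snoc src_def tgt_def)
  moreover have "word (ts @ [?t]) = w" using ts by (simp add: lblw_def lbl_def)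
  moreover have "x \<otimes>\<^bsub>Z2\<^esub> m = (vs1 (mset (ts @ [?t])), vs2 (mset (ts @ [?t])))"
    using ts by (simp add: Z2_simps mv_def add.commute)
  ultimately show ?case by blast
next
  case (read q w x s q' m)
  then obtain ts where ts: "walk (trans A) (init A) ts q" "word ts = w" "x = (vs1 (mset ts), vs2 (mset ts))" by blast
  let ?t = "(q, Some s, q', m)"
  have "walk (trans A) (init A) (ts @ [?t]) q'" using ts read.hyps(2) by (simp add: walk_snoc src_def tgt_def)
  moreover have "word (ts @ [?t]) = w @ [s]" using ts by (simp add: lblw_def lbl_def)
  moreover have "x \<otimes>\<^bsub>Z2\<^esub> m = (vs1 (mset (ts @ [?t])), vs2 (mset (ts @ [?t])))"
    using ts by (simp add: Z2_simps mv_def add.commute)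
  ultimately show ?case by blast
qed

lemma walk_reach_Z2:
  "walk (trans A) (init A) ts q \<Longrightarrow> reach Z2 A q (word ts) (vs1 (mset ts), vs2 (mset ts))"
proof (induction ts arbitrary: q rule: rev_induct)
  case Nil
  then show ?case using reach.start[of Z2 A] by (simp add: Z2_simps)
next
  case (snoc t ts)
  obtain a l b m where t: "t = (a, l, b, m)" by (cases t) auto
  have w: "walk (trans A) (init A) ts a" "t \<in> trans A" "b = q"
    using snoc.prems t by (auto simp: walk_snoc src_def tgt_def)
  have r: "reach Z2 A a (word ts) (vs1 (mset ts), vs2 (mset ts))" using snoc.IH w(1) .
  have e: "(vs1 (mset ts), vs2 (mset ts)) \<otimes>\<^bsub>Z2\<^esub> m = (vs1 (mset (ts @ [t])), vs2 (mset (ts @ [t])))"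
    by (simp add: Z2_simps t mv_def add.commute)
  show ?case
  proof (cases l)
    case None
    have "reach Z2 A b (word ts) ((vs1 (mset ts), vs2 (mset ts)) \<otimes>\<^bsub>Z2\<^esub> m)"
      using reach.eps[OF r] w t None by simp
    then show ?thesis using e w(3) t None by (simp add: lblw_def lbl_def)
  next
    case (Some s)
    have "reach Z2 A b (word ts @ [s]) ((vs1 (mset ts), vs2 (mset ts)) \<otimes>\<^bsub>Z2\<^esub> m)"
      using reach.read[OF r] w t Some by simp
    then show ?thesis using e w(3) t Some by (simp add: lblw_def lbl_def)
  qed
qed

lemma word_rep0: "word ts = replicate n 0 \<Longrightarrow> t \<in> set ts \<Longrightarrow> lbl t = None \<or> lbl t = Some 0"
proof (induction ts arbitrary: n)
  case Nil then show ?case by simp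
next
  case (Cons t' ts)
  show ?case
  proof (cases "lbl t'")
    case None
    then show ?thesis using Cons by (auto simp: lblw_def)
  next
    case (Some s)
    then have "s # word ts = replicate n 0" using Cons.prems by (simp add: lblw_def)
    then obtain n' where "n = Suc n'" "s = 0" "word ts = replicate n' 0" by (cases n) auto
    then show ?thesis using Cons Some by auto
  qed
qed

lemma word_all0: "\<forall>t\<in>set ts. lbl t = None \<or> lbl t = Some 0 \<Longrightarrow> word ts = replicate (nl (mset ts)) 0"
  by (induction ts) (auto simp: nl_def lblw_def)

lemma length_word: "length (word ts) = nl (mset ts)"
  by (induction ts) (auto simp: nl_def lblw_def split: option.splits)



lemma mem_sum_mset_sub: "c \<in># Cs \<Longrightarrow> mset c \<subseteq># sum_mset (image_mset mset Cs)"
proof -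
  assume "c \<in># Cs"
  then have "Cs = add_mset c (Cs - {#c#})" by simp
  then have "sum_mset (image_mset mset Cs) = mset c + sum_mset (image_mset mset (Cs - {#c#}))"
    by (metis image_mset_add_mset sum_mset.insert)
  then show ?thesis by simp
qed

lemma pump:
  fixes h :: "nat \<Rightarrow> nat"
  assumes wf: "wf_gaut Z2 A"
    and acc: "\<forall>i. replicate (h i) 0 \<in> gaut_lang Z2 A"
    and mono: "\<forall>i j. i < j \<longrightarrow> h i < h j"
  shows "\<exists>m d. d > 0 \<and> (\<forall>k. replicate (m + k * d) 0 \<in> gaut_lang Z2 A)"
proof -
  define S where "S = states A"
  define T where "T = trans A"
  define s where "s = card S"
  have finS: "finite S" and initS: "init A \<in> S" and accS: "accs A \<subseteq> S" and finT: "finite T"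
    using wf unfolding wf_gaut_def S_def T_def by auto
  have tgtS: "\<forall>t\<in>T. tgt t \<in> S"
    using wf unfolding wf_gaut_def S_def T_def tgt_def by fastforce
  define P where "P i qf ts \<sigma> Cs \<longleftrightarrow> qf \<in> accs A \<and> walk T (init A) ts qf \<and> word ts = replicate (h i) 0 \<and>
      vs1 (mset ts) = 0 \<and> vs2 (mset ts) = 0 \<and> walk T (init A) \<sigma> qf \<and> length \<sigma> \<le> s \<and>
      (\<forall>c\<in>#Cs. c \<noteq> [] \<and> length c \<le> s \<and> (\<exists>p. walk T p c p)) \<and>
      mset ts = mset \<sigma> + sum_mset (image_mset mset Cs)" for i qf ts \<sigma> and Cs :: "(nat \<times> nat option \<times> nat \<times> int \<times> int) list multiset"
  have ex: "\<exists>qf ts \<sigma> Cs. P i qf ts \<sigma> Cs" for i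
  proof -
    obtain qf where qf: "qf \<in> accs A" "reach Z2 A qf (replicate (h i) 0) \<one>\<^bsub>Z2\<^esub>"
      using acc unfolding gaut_lang_def by blast
    obtain ts where ts: "walk T (init A) ts qf" "word ts = replicate (h i) 0" "(0, 0) = (vs1 (mset ts), vs2 (mset ts))"
      using reach_walk_Z2[OF qf(2)] unfolding T_def by (auto simp: Z2_simps)
    obtain \<sigma> Cs where d: "walk T (init A) \<sigma> qf" "length \<sigma> \<le> s"
      "\<forall>c\<in>#Cs. c \<noteq> [] \<and> length c \<le> s \<and> (\<exists>p. walk T p c p)"
      "mset ts = mset \<sigma> + sum_mset (image_mset mset Cs)"
      using decomp[OF ts(1) finS initS tgtS] unfolding s_def by blast
    show ?thesis unfolding P_def using qf ts d by (intro exI[of _ qf] exI[of _ ts] exI[of _ \<sigma>] exI[of _ Cs]) simp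
  qed
  then obtain QF TS SG CS where PP: "\<And>i. P i (QF i) (TS i) (SG i) (CS i)" by metis
  define Lists where "Lists = {xs. set xs \<subseteq> T \<and> length xs \<le> s}"
  have finL: "finite Lists" unfolding Lists_def using finite_lists_length_le[OF finT] by simp
  define g where "g i = (QF i, SG i, set_mset (CS i))" for i
  have "range g \<subseteq> S \<times> Lists \<times> Pow Lists"
  proof
    fix y assume "y \<in> range g"
    then obtain i where y: "y = g i" by blast
    have "QF i \<in> S" using PP[of i] accS unfolding P_def by auto
    moreover have "SG i \<in> Lists" using PP[of i] walk_set unfolding P_def Lists_def by blast
    moreover have "set_mset (CS i) \<subseteq> Lists" using PP[of i] walk_set unfolding P_def Lists_def by blast
    ultimately show "y \<in> S \<times> Lists \<times> Pow Lists" unfolding y g_def by simp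
  qed
  then have "finite (range g)" using finS finL by (meson finite_SigmaI finite_Pow_iff finite_subset)
  then obtain i j where ij: "i < j" "g i = g j" "\<forall>c\<in>Lists. count (CS i) c \<le> count (CS j) c"
    using dickson_col[OF finL, of g "\<lambda>i c. count (CS i) c"] by blast
  have Pi: "P i (QF i) (TS i) (SG i) (CS i)" and Pj: "P j (QF i) (TS j) (SG i) (CS j)"
    using PP[of i] PP[of j] ij(2) unfolding g_def by auto
  have setCS: "set_mset (CS j) = set_mset (CS i)" using ij(2) unfolding g_def by auto
  have "set_mset (CS i) \<subseteq> Lists" using Pi walk_set unfolding P_def Lists_def by blast
  then have "CS i \<subseteq># CS j"
  proof (intro mset_subset_eqI)
    fix c
    show "count (CS i) c \<le> count (CS j) c"
    proof (cases "c \<in> Lists")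
      case True then show ?thesis using ij(3) by blast
    next
      case False
      then have "c \<notin># CS i" using \<open>set_mset (CS i) \<subseteq> Lists\<close> by blast
      then show ?thesis by (simp add: not_in_iff)
    qed
  qed
  define D where "D = CS j - CS i"
  have CSj: "CS j = CS i + D" unfolding D_def using \<open>CS i \<subseteq># CS j\<close> by simp
  define E where "E = sum_mset (image_mset mset D)"
  have Pi1: "walk T (init A) (TS i) (QF i)" "QF i \<in> accs A" "word (TS i) = replicate (h i) 0"
    "vs1 (mset (TS i)) = 0" "vs2 (mset (TS i)) = 0" "mset (TS i) = mset (SG i) + sum_mset (image_mset mset (CS i))"
    using Pi unfolding P_def by blast+
  have Pj1: "word (TS j) = replicate (h j) 0"
    "vs1 (mset (TS j)) = 0" "vs2 (mset (TS j)) = 0" "mset (TS j) = mset (SG i) + sum_mset (image_mset mset (CS j))"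
    "\<forall>c\<in>#CS j. c \<noteq> [] \<and> length c \<le> s \<and> (\<exists>p. walk T p c p)"
    using Pj unfolding P_def by blast+
  have mj: "mset (TS j) = mset (TS i) + E"
    unfolding Pj1(4) Pi1(6) E_def CSj by (simp add: add_ac)
  have Dok: "\<forall>c\<in>#D. c \<noteq> [] \<and> (\<exists>p. walk T p c p) \<and> set c \<subseteq> set (TS i)"
  proof
    fix c assume cD: "c \<in># D"
    then have cj: "c \<in># CS j" unfolding CSj by simp
    then have ci: "c \<in># CS i" using setCS by blast
    have 1: "c \<noteq> [] \<and> (\<exists>p. walk T p c p)" using Pj1(5) cj by blast
    have "mset c \<subseteq># mset (TS i)"
      unfolding Pi1(6) using mem_sum_mset_sub[OF ci]
      by (metis mset_subset_eq_add_right subset_mset.order_trans)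
    then have "set c \<subseteq> set (TS i)" by (metis set_mset_mono set_mset_mset)
    then show "c \<noteq> [] \<and> (\<exists>p. walk T p c p) \<and> set c \<subseteq> set (TS i)" using 1 by blast
  qed
  have wi: "walk T (init A) (TS i) (QF i)" and qfacc: "QF i \<in> accs A" using Pi1 by auto
  have E1: "vs1 E = 0" and E2: "vs2 E = 0" using Pi1(4,5) Pj1(2,3) mj by auto
  have nli: "nl (mset (TS i)) = h i" using Pi1(3) length_word[of "TS i"] by simp
  have nlj: "nl (mset (TS j)) = h j" using Pj1(1) length_word[of "TS j"] by simp
  have nlE: "nl E = h j - h i" using nli nlj mj by simp
  have hlt: "h i < h j" using mono ij(1) by blast
  have lbl0: "\<forall>t\<in>set (TS i). lbl t = None \<or> lbl t = Some 0"
    using Pi1(3) word_rep0 by blast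
  have "replicate (h i + k * (h j - h i)) 0 \<in> gaut_lang Z2 A" for k
  proof -
    obtain ts' where ts': "walk T (init A) ts' (QF i)" "mset ts' = mset (TS i) + repeat_mset k E" "set ts' = set (TS i)"
      using insert_cycles_rep[OF wi Dok, of k] unfolding E_def by blast
    have r: "reach Z2 A (QF i) (word ts') (vs1 (mset ts'), vs2 (mset ts'))"
      using walk_reach_Z2[of A ts'] ts'(1) unfolding T_def by blast
    have "vs1 (mset ts') = 0" "vs2 (mset ts') = 0" using ts'(2) Pi1(4,5) E1 E2 by auto
    moreover have "word ts' = replicate (h i + k * (h j - h i)) 0"
      using word_all0[of ts'] lbl0 ts'(2,3) nli nlE by simp
    ultimately show ?thesis using r qfacc unfolding gaut_lang_def by (auto simp: Z2_simps)
  qed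
  then show ?thesis using hlt by (intro exI[of _ "h i"] exI[of _ "h j - h i"]) auto
qed



lemma noAP:
  fixes m d :: nat
  assumes d: "d > 0" and H: "\<forall>k. \<exists>n. 2 * (m + k * d) = n * (n + 1)"
  shows False
proof -
  obtain n1 where n1: "2 * (m + (2*d) * d) = n1 * (n1 + 1)" using H by blast
  obtain n2 where n2: "2 * (m + (2*d+1) * d) = n2 * (n2 + 1)" using H by blast
  have "n1 > d"
  proof (rule ccontr)
    assume "\<not> d < n1"
    then have "n1 * (n1 + 1) \<le> d * (d + 1)" by (intro mult_le_mono) auto
    also have "\<dots> \<le> 2 * (d * d)" using d by simp
    finally have "n1 * (n1 + 1) \<le> 2 * (d * d)" .
    moreover have "n1 * (n1 + 1) = 2 * m + 4 * (d * d)" using n1 by (simp add: algebra_simps)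
    moreover have "0 < d * d" using d by simp
    ultimately show False by linarith
  qed
  have e: "n2 * (n2 + 1) = n1 * (n1 + 1) + 2 * d" using n1 n2 by (simp add: algebra_simps)
  have "n2 > n1"
  proof (rule ccontr)
    assume "\<not> n1 < n2"
    then have "n2 * (n2 + 1) \<le> n1 * (n1 + 1)" by (intro mult_le_mono) auto
    then show False using e d by simp
  qed
  then have "(n1 + 1) * (n1 + 2) \<le> n2 * (n2 + 1)" by (intro mult_le_mono) auto
  then show False using e \<open>n1 > d\<close> by (simp add: algebra_simps)
qed



lemma Heis_simps: "carrier Heis = UNIV" "\<one>\<^bsub>Heis\<^esub> = (0, 0, 0)"
  "(a, b, c) \<otimes>\<^bsub>Heis\<^esub> (a', b', c') = (a + a', b + b', c + c' + a * b')"
  by (simp_all add: Heis_def)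

lemma Heis_mult_gen: "x \<otimes>\<^bsub>Heis\<^esub> y = (fst x + fst y, fst (snd x) + fst (snd y), snd (snd x) + snd (snd y) + fst x * fst (snd y))"
  by (simp add: Heis_def split: prod.splits)

definition emb :: "nat \<times> nat option \<times> nat \<times> (int \<times> int) \<Rightarrow> nat \<times> nat option \<times> nat \<times> (int \<times> int \<times> int)" where
  "emb t = (src t, lbl t, tgt t, (0, fst (mv t), snd (mv t)))"

definition embA :: "(int \<times> int) gaut \<Rightarrow> (int \<times> int \<times> int) gaut" where
  "embA A = \<lparr>states = states A, alph = alph A, init = init A, accs = accs A, trans = emb ` trans A\<rparr>"

lemma embA_simps[simp]: "states (embA A) = states A" "alph (embA A) = alph A" "init (embA A) = init A"
  "accs (embA A) = accs A" "trans (embA A) = emb ` trans A"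
  by (simp_all add: embA_def)

lemma emb_mem: "(q, l, q', m) \<in> emb ` T \<longleftrightarrow> (\<exists>a b. m = (0, a, b) \<and> (q, l, q', (a, b)) \<in> T)"
  by (force simp: emb_def src_def lbl_def tgt_def mv_def)

lemma reach_emb1: "reach Heis (embA A) q w X \<Longrightarrow> \<exists>x y. X = (0, x, y) \<and> reach Z2 A q w (x, y)"
proof (induction rule: reach.induct)
  case start
  then show ?case using reach.start[of Z2 A] by (simp add: Heis_simps Z2_simps)
next
  case (eps q w x q' m)
  then obtain a b where m: "m = (0, a, b)" "(q, None, q', (a, b)) \<in> trans A" by (auto simp: emb_mem)
  obtain x1 y1 where x: "x = (0, x1, y1)" "reach Z2 A q w (x1, y1)" using eps.IH by blast
  have "reach Z2 A q' w ((x1, y1) \<otimes>\<^bsub>Z2\<^esub> (a, b))" using reach.eps[OF x(2) m(2)] .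
  then show ?case using x m by (simp add: Heis_simps Z2_simps)
next
  case (read q w x s q' m)
  then obtain a b where m: "m = (0, a, b)" "(q, Some s, q', (a, b)) \<in> trans A" by (auto simp: emb_mem)
  obtain x1 y1 where x: "x = (0, x1, y1)" "reach Z2 A q w (x1, y1)" using read.IH by blast
  have "reach Z2 A q' (w @ [s]) ((x1, y1) \<otimes>\<^bsub>Z2\<^esub> (a, b))" using reach.read[OF x(2) m(2)] .
  then show ?case using x m by (simp add: Heis_simps Z2_simps)
qed

lemma reach_emb2: "reach Z2 A q w X \<Longrightarrow> reach Heis (embA A) q w (0, fst X, snd X)"
proof (induction rule: reach.induct)
  case start
  then show ?case using reach.start[of Heis "embA A"] by (simp add: Heis_simps Z2_simps)
next
  case (eps q w x q' m)
  have "(q, None, q', (0, fst m, snd m)) \<in> trans (embA A)" using eps.hyps(2) by (simp add: emb_mem)  (metis prod.collapse)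
  from reach.eps[OF eps.IH this] show ?case by (simp add: Heis_mult_gen Z2_simps)
next
  case (read q w x s q' m)
  have "(q, Some s, q', (0, fst m, snd m)) \<in> trans (embA A)" using read.hyps(2) by (simp add: emb_mem) (metis prod.collapse)
  from reach.read[OF read.IH this] show ?case by (simp add: Heis_mult_gen Z2_simps)
qed

lemma embA_lang: "gaut_lang Heis (embA A) = gaut_lang Z2 A"
proof -
  have "reach Heis (embA A) q w (0, 0, 0) \<longleftrightarrow> reach Z2 A q w (0, 0)" for q w
    using reach_emb1[of A q w "(0,0,0)"] reach_emb2[of A q w "(0,0)"] by auto
  then show ?thesis unfolding gaut_lang_def by (simp add: Heis_simps Z2_simps)
qed

lemma embA_wf: "wf_gaut Z2 A \<Longrightarrow> wf_gaut Heis (embA A)"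
  unfolding wf_gaut_def by (auto simp: Heis_simps emb_def src_def lbl_def tgt_def)

lemma L_sub: "LClass Z2 \<subseteq> LClass Heis"
  unfolding LClass_def using embA_lang embA_wf by blast



definition B :: "(int \<times> int \<times> int) gaut" where
  "B = \<lparr>states = {0, 1, 2, 3}, alph = {0}, init = 0, accs = {3},
        trans = {(0, None, 0, (1, 1, 0)), (0, None, 1, (0, 0, 0)), (1, Some 0, 1, (0, 0, -1)),
                 (1, None, 2, (0, 0, 0)), (2, None, 2, (-1, 0, 0)), (2, None, 3, (0, 0, 0)),
                 (3, None, 3, (0, -1, 0))}\<rparr>"

definition Ltri :: "nat list set" where
  "Ltri = {w. \<exists>c n. w = replicate c 0 \<and> 2 * c = n * (n + 1)}"

lemma B_wf: "wf_gaut Heis B"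
  unfolding wf_gaut_def B_def by (simp add: Heis_simps)

definition invB :: "nat \<Rightarrow> nat list \<Rightarrow> int \<times> int \<times> int \<Rightarrow> bool" where
  "invB q w x = (case x of (a, b, c) \<Rightarrow> set w \<subseteq> {0} \<and> (
     (q = 0 \<and> w = [] \<and> a \<ge> 0 \<and> b = a \<and> 2 * c = a * (a - 1)) \<or>
     (q = 1 \<and> a \<ge> 0 \<and> b = a \<and> 2 * (c + int (length w)) = a * (a - 1)) \<or>
     (q = 2 \<and> b \<ge> 0 \<and> 2 * (c + int (length w)) = b * (b - 1)) \<or>
     (q = 3 \<and> (\<exists>n\<ge>0. 2 * (c + int (length w) + (n - b) * a) = n * (n - 1)))))"

lemma B_trans: "t \<in> trans B \<longleftrightarrow> t \<in> {(0, None, 0, (1, 1, 0)), (0, None, 1, (0, 0, 0)), (1, Some 0, 1, (0, 0, -1)),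
                 (1, None, 2, (0, 0, 0)), (2, None, 2, (-1, 0, 0)), (2, None, 3, (0, 0, 0)),
                 (3, None, 3, (0, -1, 0))}"
  by (simp add: B_def)

lemma B_sound: "reach Heis B q w x \<Longrightarrow> invB q w x"
proof (induction rule: reach.induct)
  case start
  then show ?case by (simp add: invB_def Heis_simps B_def)
next
  case (eps q w x q' m)
  obtain a b c where x: "x = (a, b, c)" by (cases x) auto
  from eps.hyps(2) have "(q, None, q', m) \<in> trans B" .
  then consider "q = 0" "q' = 0" "m = (1, 1, 0)" | "q = 0" "q' = 1" "m = (0, 0, 0)"
    | "q = 1" "q' = 2" "m = (0, 0, 0)" | "q = 2" "q' = 2" "m = (-1, 0, 0)"
    | "q = 2" "q' = 3" "m = (0, 0, 0)" | "q = 3" "q' = 3" "m = (0, -1, 0)"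
    unfolding B_trans by auto
  then show ?case
  proof cases
    case 1
    then show ?thesis using eps.IH x by (auto simp: invB_def Heis_simps algebra_simps)
  next
    case 2
    then show ?thesis using eps.IH x by (auto simp: invB_def Heis_simps algebra_simps)
  next
    case 3
    then show ?thesis using eps.IH x by (auto simp: invB_def Heis_simps algebra_simps)
  next
    case 4
    then show ?thesis using eps.IH x by (auto simp: invB_def Heis_simps algebra_simps)
  next
    case 5
    then show ?thesis using eps.IH x by (auto simp: invB_def Heis_simps algebra_simps)
  next
    case 6
    then obtain n where n: "n \<ge> 0" "2 * (c + int (length w) + (n - b) * a) = n * (n - 1)" "set w \<subseteq> {0}"
      using eps.IH x by (auto simp: invB_def)
    have "2 * ((c - a) + int (length w) + (n - (b - 1)) * a) = n * (n - 1)" using n(2) by (simp add: algebra_simps)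
    then show ?thesis using 6 x n by (auto simp: invB_def Heis_simps)
  qed
next
  case (read q w x s q' m)
  obtain a b c where x: "x = (a, b, c)" by (cases x) auto
  from read.hyps(2) have "q = 1" "s = 0" "q' = 1" "m = (0, 0, -1)" unfolding B_trans by auto
  then show ?case using read.IH x by (auto simp: invB_def Heis_simps algebra_simps)
qed

lemma B_lang1: "gaut_lang Heis B \<subseteq> Ltri"
proof
  fix w assume "w \<in> gaut_lang Heis B"
  then have r: "reach Heis B 3 w (0, 0, 0)" by (simp add: gaut_lang_def B_def Heis_simps)
  from B_sound[OF r] obtain n :: int where n: "n \<ge> 0" "2 * int (length w) = n * (n - 1)" "set w \<subseteq> {0}"
    by (auto simp: invB_def)
  have w: "w = replicate (length w) 0" using n(3) by (metis replicate_length_same singletonD subset_iff)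
  obtain k where k: "n = int k" using n(1) nonneg_eq_int by blast
  show "w \<in> Ltri"
  proof (cases k)
    case 0
    then have "length w = 0" using n(2) k by simp
    then show ?thesis unfolding Ltri_def using w by (intro CollectI exI[of _ 0] exI[of _ 0]) simp
  next
    case (Suc k')
    then have "int (2 * length w) = int (k' * (k' + 1))" using n(2) k by (simp add: algebra_simps)
    then have "2 * length w = k' * (k' + 1)" by (simp only: of_nat_eq_iff)
    then show ?thesis unfolding Ltri_def using w by blast
  qed
qed

lemma rep_snoc: "replicate k x @ [x] = replicate (Suc k) x"
  by (simp add: replicate_append_same)

lemma B_loop0: "reach Heis B 0 [] (int N, int N, int (\<Sum>i<N. i))"
proof (induction N)
  case 0
  then show ?case using reach.start[of Heis B] by (simp add: Heis_simps B_def)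
next
  case (Suc N)
  have "(0, None, 0, (1, 1, 0)) \<in> trans B" by (simp add: B_def)
  from reach.eps[OF Suc this] show ?case by (simp add: Heis_simps add_ac)
qed

lemma B_loop1: "reach Heis B 1 [] x \<Longrightarrow> x = (a, b, c) \<Longrightarrow> reach Heis B 1 (replicate k 0) (a, b, c - int k)"
proof (induction k)
  case 0
  then show ?case by simp
next
  case (Suc k)
  have "(1, Some 0, 1, (0, 0, -1)) \<in> trans B" by (simp add: B_def)
  from reach.read[OF Suc.IH[OF Suc.prems] this] show ?case by (simp add: Heis_simps rep_snoc algebra_simps)
qed

lemma B_loop2: "reach Heis B 2 w (a, b, c) \<Longrightarrow> reach Heis B 2 w (a - int j, b, c)"
proof (induction j)
  case 0
  then show ?case by simp
next
  case (Suc j)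
  have "(2, None, 2, (-1, 0, 0)) \<in> trans B" by (simp add: B_def)
  from reach.eps[OF Suc.IH[OF Suc.prems] this] show ?case by (simp add: Heis_simps algebra_simps)
qed

lemma B_loop3: "reach Heis B 3 w (0, b, c) \<Longrightarrow> reach Heis B 3 w (0, b - int j, c)"
proof (induction j)
  case 0
  then show ?case by simp
next
  case (Suc j)
  have "(3, None, 3, (0, -1, 0)) \<in> trans B" by (simp add: B_def)
  from reach.eps[OF Suc.IH[OF Suc.prems] this] show ?case by (simp add: Heis_simps algebra_simps)
qed

lemma B_lang2: "Ltri \<subseteq> gaut_lang Heis B"
proof
  fix w assume "w \<in> Ltri"
  then obtain c n where w: "w = replicate c 0" "2 * c = n * (n + 1)" unfolding Ltri_def by blast
  define N where "N = Suc n"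
  have sumN: "2 * (\<Sum>i<N. i) = N * (N - 1)" for N :: nat
    by (induction N) (auto simp: algebra_simps)
  have cs: "(\<Sum>i<N. i) = c" using sumN[of N] w(2) unfolding N_def by (simp add: algebra_simps)
  have r0: "reach Heis B 0 [] (int N, int N, int c)" using B_loop0[of N] cs by simp
  have "(0, None, 1, (0, 0, 0)) \<in> trans B" by (simp add: B_def)
  from reach.eps[OF r0 this] have r1: "reach Heis B 1 [] (int N, int N, int c)" by (simp add: Heis_simps)
  have r1': "reach Heis B 1 w (int N, int N, 0)" using B_loop1[OF r1 refl, of c] w(1) by simp
  have "(1, None, 2, (0, 0, 0)) \<in> trans B" by (simp add: B_def)
  from reach.eps[OF r1' this] have r2: "reach Heis B 2 w (int N, int N, 0)" by (simp add: Heis_simps)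
  have r2': "reach Heis B 2 w (0, int N, 0)" using B_loop2[OF r2, of N] by simp
  have "(2, None, 3, (0, 0, 0)) \<in> trans B" by (simp add: B_def)
  from reach.eps[OF r2' this] have r3: "reach Heis B 3 w (0, int N, 0)" by (simp add: Heis_simps)
  have r3': "reach Heis B 3 w (0, 0, 0)" using B_loop3[OF r3, of N] by simp
  then show "w \<in> gaut_lang Heis B" unfolding gaut_lang_def by (simp add: B_def Heis_simps)
qed

lemma Ltri_Heis: "Ltri \<in> LClass Heis"
  unfolding LClass_def using B_wf B_lang1 B_lang2 by blast


lemma theorem3p10_aux: "Ltri \<notin> LClass Z2"
proof
  assume "Ltri \<in> LClass Z2"
  then obtain A where A: "wf_gaut Z2 A" "gaut_lang Z2 A = Ltri" unfolding LClass_def by blast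
  define h where "h i = i * (i + 1) div 2" for i :: nat
  have h2: "2 * h i = i * (i + 1)" for i
  proof -
    have "even (i * (i + 1))" by simp
    then show ?thesis unfolding h_def by simp
  qed
  have acc: "\<forall>i. replicate (h i) 0 \<in> gaut_lang Z2 A"
    using A(2) h2 unfolding Ltri_def by blast
  have mono: "\<forall>i j. i < j \<longrightarrow> h i < h j"
  proof (intro allI impI)
    fix i j :: nat assume "i < j"
    then have "i * (i + 1) < j * (j + 1)" by (intro mult_strict_mono) auto
    then show "h i < h j" using h2[of i] h2[of j] by linarith
  qed
  obtain m d where md: "d > 0" "\<forall>k. replicate (m + k * d) 0 \<in> gaut_lang Z2 A"
    using pump[OF A(1) acc mono] by blast
  have "\<forall>k. \<exists>n. 2 * (m + k * d) = n * (n + 1)"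
  proof
    fix k
    have "replicate (m + k * d) 0 \<in> Ltri" using md(2) A(2) by blast
    then obtain c n where "replicate (m + k * d) (0::nat) = replicate c 0" "2 * c = n * (n + 1)"
      unfolding Ltri_def by blast
    then show "\<exists>n. 2 * (m + k * d) = n * (n + 1)" by (metis length_replicate)
  qed
  then show False using noAP[OF md(1)] by blast
qed

theorem theorem3p10:
  shows "LClass Z2 \<subset> LClass Heis"
  using L_sub Ltri_Heis theorem3p10_aux by blast

end
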